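(* Let $\mathcal{G}=(G,\odot,\leq)$ be a real continuous Alo-group with $G$ an open interval of $\mathbb{R}$, and let $\tilde A=([a_{ij}^-,a_{ij}^+])$ be an $n\times n$ $[\mathcal{G}]$-reciprocal IPCM. The following are equivalent: (1) $\tilde A$ is $[\mathcal{G}]$-consistent; (2) $a_{ik}^-\odot a_{ik}^+=a_{ij}^-\odot a_{ij}^+\odot a_{jk}^-\odot a_{jk}^+$ for all $i,j,k\in\{1,\dots,n\}$; (3) $a_{ik}^-\odot a_{ik}^+=a_{ij}^-\odot a_{ij}^+\odot a_{jk}^-\odot a_{jk}^+$ for all $i<j<k$.
   Context: An Alo-group $(G,\odot,\leq)$ is an Abelian group with a weak order $\leq$ such that $a\leq b\Rightarrow a\odot c\leq b\odot c$; real means $G\subseteq\mathbb{R}$ with usual order, continuous means $\odot$ is continuous. $[G]=\{[a^-,a^+]: a^-,a^+\in G,\ a^-\leq a^+\}$; $\tilde a^{(-1)}=[(a^+)^{(-1)},(a^-)^{(-1)}]$; $\tilde a\odot_{[G]}\tilde b=\{a\odot b: a\in\tilde a,b\in\tilde b\}$. An IPCM is an $n\times n$ matrix with entries in $[G]$; $[\mathcal{G}]$-reciprocal means $\tilde a_{ji}=\tilde a_{ij}^{(-1)}$ for all $i,j$. $\tilde A$ is $[\mathcal{G}]$-consistent if $\tilde a_{ij}\odot_{[G]}\tilde a_{jk}\odot_{[G]}\tilde a_{ki}=\tilde a_{ik}\odot_{[G]}\tilde a_{kj}\odot_{[G]}\tilde a_{ji}$ for all $i,j,k\in\{1,\dots,n\}$.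 *)

theory Defs
  imports "HOL-Analysis.Analysis"
begin

definition real_alo_group :: "real set \<Rightarrow> (real \<Rightarrow> real \<Rightarrow> real) \<Rightarrow> bool" where
  "real_alo_group G op \<longleftrightarrow>
     (\<forall>a\<in>G. \<forall>b\<in>G. op a b \<in> G) \<and>
     (\<forall>a\<in>G. \<forall>b\<in>G. \<forall>c\<in>G. op (op a b) c = op a (op b c)) \<and>
     (\<forall>a\<in>G. \<forall>b\<in>G. op a b = op b a) \<and>
     (\<exists>e\<in>G. (\<forall>a\<in>G. op a e = a) \<and> (\<forall>a\<in>G. \<exists>b\<in>G. op a b = e)) \<and>
     (\<forall>a\<in>G. \<forall>b\<in>G. \<forall>c\<in>G. a \<le> b \<longrightarrow> op a c \<le> op b c)"

definition continuous_alo_group :: "real set \<Rightarrow> (real \<Rightarrow> real \<Rightarrow> real) \<Rightarrow> bool" where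
  "continuous_alo_group G op \<longleftrightarrow>
     real_alo_group G op \<and> continuous_on (G \<times> G) (\<lambda>(a, b). op a b)"

definition alo_unit :: "real set \<Rightarrow> (real \<Rightarrow> real \<Rightarrow> real) \<Rightarrow> real" where
  "alo_unit G op = (THE e. e \<in> G \<and> (\<forall>a\<in>G. op a e = a))"

definition alo_inv :: "real set \<Rightarrow> (real \<Rightarrow> real \<Rightarrow> real) \<Rightarrow> real \<Rightarrow> real" where
  "alo_inv G op a = (THE b. b \<in> G \<and> op a b = alo_unit G op)"

text \<open>An interval [a^-, a^+] of [G] is represented by the pair (a^-, a^+).\<close>
definition in_intG :: "real set \<Rightarrow> real \<times> real \<Rightarrow> bool" where
  "in_intG G x \<longleftrightarrow> fst x \<in> G \<and> snd x \<in> G \<and> fst x \<le> snd x"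

definition int_set :: "real \<times> real \<Rightarrow> real set" where
  "int_set x = {fst x .. snd x}"

definition set_op :: "(real \<Rightarrow> real \<Rightarrow> real) \<Rightarrow> real set \<Rightarrow> real set \<Rightarrow> real set" where
  "set_op op X Y = {op a b | a b. a \<in> X \<and> b \<in> Y}"

definition int_inv :: "real set \<Rightarrow> (real \<Rightarrow> real \<Rightarrow> real) \<Rightarrow> real \<times> real \<Rightarrow> real \<times> real" where
  "int_inv G op x = (alo_inv G op (snd x), alo_inv G op (fst x))"

text \<open>n x n IPCM with indices 0..n-1 (entries given as pairs).\<close>
definition is_IPCM :: "real set \<Rightarrow> nat \<Rightarrow> (nat \<Rightarrow> nat \<Rightarrow> real \<times> real) \<Rightarrow> bool" where
  "is_IPCM G n A \<longleftrightarrow> (\<forall>i<n. \<forall>j<n. in_intG G (A i j))"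

definition G_reciprocal :: "real set \<Rightarrow> (real \<Rightarrow> real \<Rightarrow> real) \<Rightarrow> nat \<Rightarrow> (nat \<Rightarrow> nat \<Rightarrow> real \<times> real) \<Rightarrow> bool" where
  "G_reciprocal G op n A \<longleftrightarrow> (\<forall>i<n. \<forall>j<n. A j i = int_inv G op (A i j))"

definition G_consistent :: "(real \<Rightarrow> real \<Rightarrow> real) \<Rightarrow> nat \<Rightarrow> (nat \<Rightarrow> nat \<Rightarrow> real \<times> real) \<Rightarrow> bool" where
  "G_consistent op n A \<longleftrightarrow> (\<forall>i<n. \<forall>j<n. \<forall>k<n.
     set_op op (set_op op (int_set (A i j)) (int_set (A j k))) (int_set (A k i)) =
     set_op op (set_op op (int_set (A i k)) (int_set (A k j))) (int_set (A j i)))"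

end

theory Submission
  imports Defs
begin

lemma six: "(i::nat) \<noteq> j \<Longrightarrow> j \<noteq> k \<Longrightarrow> i \<noteq> k \<Longrightarrow>
  (i < j \<and> j < k) \<or> (i < k \<and> k < j) \<or> (j < i \<and> i < k) \<or> (j < k \<and> k < i) \<or> (k < i \<and> i < j) \<or> (k < j \<and> j < i)"
  by arith

locale ag =
  fixes G :: "real set" and op :: "real \<Rightarrow> real \<Rightarrow> real"
  assumes rag: "real_alo_group G op"
begin

lemma cl[simp]: "a \<in> G \<Longrightarrow> b \<in> G \<Longrightarrow> op a b \<in> G"
  using rag unfolding real_alo_group_def by blast
lemma assoc: "a \<in> G \<Longrightarrow> b \<in> G \<Longrightarrow> c \<in> G \<Longrightarrow> op (op a b) c = op a (op b c)"
  using rag unfolding real_alo_group_def by blast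
lemma comm: "a \<in> G \<Longrightarrow> b \<in> G \<Longrightarrow> op a b = op b a"
  using rag unfolding real_alo_group_def by blast
lemma lcomm: "a \<in> G \<Longrightarrow> b \<in> G \<Longrightarrow> c \<in> G \<Longrightarrow> op a (op b c) = op b (op a c)"
  by (metis assoc comm)
lemma mono1: "a \<in> G \<Longrightarrow> b \<in> G \<Longrightarrow> c \<in> G \<Longrightarrow> a \<le> b \<Longrightarrow> op a c \<le> op b c"
  using rag unfolding real_alo_group_def by blast
lemma mono2: "a \<in> G \<Longrightarrow> b \<in> G \<Longrightarrow> c \<in> G \<Longrightarrow> a \<le> b \<Longrightarrow> op c a \<le> op c b"
  using mono1 comm by metis

definition "e = alo_unit G op"
definition "iv = alo_inv G op"

lemma ex_e: "\<exists>e\<in>G. (\<forall>a\<in>G. op a e = a) \<and> (\<forall>a\<in>G. \<exists>b\<in>G. op a b = e)"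
  using rag unfolding real_alo_group_def by blast

lemma e_props: "e \<in> G \<and> (\<forall>a\<in>G. op a e = a) \<and> (\<forall>a\<in>G. \<exists>b\<in>G. op a b = e)"
proof -
  obtain u where u: "u \<in> G" "\<forall>a\<in>G. op a u = a" "\<forall>a\<in>G. \<exists>b\<in>G. op a b = u"
    using ex_e by blast
  have "alo_unit G op = u"
    unfolding alo_unit_def
  proof (rule the_equality)
    show "u \<in> G \<and> (\<forall>a\<in>G. op a u = a)" using u by blast
    fix x assume "x \<in> G \<and> (\<forall>a\<in>G. op a x = a)"
    then show "x = u" using u comm by metis
  qed
  then show ?thesis using u e_def by simp
qed

lemma e_in[simp]: "e \<in> G" using e_props by blast
lemma runit[simp]: "a \<in> G \<Longrightarrow> op a e = a" using e_props by blast
lemma lunit[simp]: "a \<in> G \<Longrightarrow> op e a = a" using runit comm e_in by metis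

lemma iv_props: assumes "a \<in> G" shows "iv a \<in> G \<and> op a (iv a) = e"
proof -
  obtain b where b: "b \<in> G" "op a b = e" using e_props assms by blast
  have "alo_inv G op a = b"
    unfolding alo_inv_def e_def[symmetric]
  proof (rule the_equality)
    show "b \<in> G \<and> op a b = e" using b by blast
    fix x assume x: "x \<in> G \<and> op a x = e"
    have "x = op x (op a b)" using b x by simp
    also have "\<dots> = op (op x a) b" using assoc x b assms by simp
    also have "\<dots> = b" using x b assms comm by simp
    finally show "x = b" .
  qed
  then show ?thesis using b iv_def by simp
qed

lemma iv_in[simp]: "a \<in> G \<Longrightarrow> iv a \<in> G" using iv_props by blast
lemma rinv[simp]: "a \<in> G \<Longrightarrow> op a (iv a) = e" using iv_props by blast
lemma linv[simp]: "a \<in> G \<Longrightarrow> op (iv a) a = e" using iv_props comm by (metis iv_in)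
lemma rinv2[simp]: "a \<in> G \<Longrightarrow> b \<in> G \<Longrightarrow> op a (op (iv a) b) = b"
  by (metis assoc iv_in lunit rinv)
lemma linv2[simp]: "a \<in> G \<Longrightarrow> b \<in> G \<Longrightarrow> op (iv a) (op a b) = b"
  by (metis assoc iv_in lunit linv)

lemma cancel: "a \<in> G \<Longrightarrow> b \<in> G \<Longrightarrow> w \<in> G \<Longrightarrow> (op a w = op b w) = (a = b)"
  by (metis assoc iv_in rinv runit)

lemmas ac = assoc comm lcomm

lemma swap4: "a \<in> G \<Longrightarrow> b \<in> G \<Longrightarrow> c \<in> G \<Longrightarrow> d \<in> G \<Longrightarrow>
  op (op a b) (op c d) = op (op a c) (op b d)"
  by (simp add: ac)

lemma lower: assumes "x1 \<in> G" "x2 \<in> G" "y1 \<in> G" "y2 \<in> G" "z1 \<in> G" "z2 \<in> G"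
  shows "(op (op x1 y1) (iv z2) = op (op z1 (iv y2)) (iv x2)) \<longleftrightarrow>
         (op z1 z2 = op (op (op x1 x2) y1) y2)"
proof -
  let ?w = "op (op z2 y2) x2"
  have w: "?w \<in> G" using assms by simp
  have 1: "op (op (op x1 y1) (iv z2)) ?w = op (op (op x1 x2) y1) y2"
    using assms by (simp add: ac)
  have "op (op (op z1 (iv y2)) (iv x2)) ?w = op (op (op z1 (iv y2)) (op z2 y2)) (op (iv x2) x2)"
    using assms swap4 by simp
  also have "\<dots> = op (op z1 (iv y2)) (op z2 y2)" using assms by simp
  also have "\<dots> = op (op z1 z2) (op (iv y2) y2)" using assms swap4 by simp
  also have "\<dots> = op z1 z2" using assms by simp
  finally have 2: "op (op (op z1 (iv y2)) (iv x2)) ?w = op z1 z2" .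
  show ?thesis using cancel[OF _ _ w, of "op (op x1 y1) (iv z2)" "op (op z1 (iv y2)) (iv x2)"]
    1 2 assms by auto
qed


lemma inv_unique: "a \<in> G \<Longrightarrow> b \<in> G \<Longrightarrow> op a b = e \<Longrightarrow> b = iv a"
  using linv2[of a b] by simp

lemma iv_op: "a \<in> G \<Longrightarrow> b \<in> G \<Longrightarrow> iv (op a b) = op (iv a) (iv b)"
proof -
  assume a: "a \<in> G" and b: "b \<in> G"
  have "op (op a b) (op (iv a) (iv b)) = op (op a (iv a)) (op b (iv b))"
    using a b swap4[of a b "iv a" "iv b"] by simp
  then have "op (op a b) (op (iv a) (iv b)) = e" using a b by simp
  then show ?thesis using inv_unique[of "op a b" "op (iv a) (iv b)"] a b by simp
qed

lemma id1: "u \<in> G \<Longrightarrow> v \<in> G \<Longrightarrow> op (op u v) (iv v) = u"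
  by (simp add: assoc)
lemma id2: "u \<in> G \<Longrightarrow> v \<in> G \<Longrightarrow> op v (op (iv u) (iv v)) = iv u"
  using lcomm[of v "iv u" "iv v"] by simp
lemma id3: "u \<in> G \<Longrightarrow> v \<in> G \<Longrightarrow> op (iv (op u v)) u = iv v"
  using iv_op[of u v] comm[of "op (iv u) (iv v)" u] by simp
lemma id4: "u \<in> G \<Longrightarrow> v \<in> G \<Longrightarrow> iv (op u v) = op (iv v) (iv u)"
  using iv_op[of u v] comm[of "iv u" "iv v"] by simp

lemma trans_all:
  fixes q :: "nat \<Rightarrow> nat \<Rightarrow> real"
  assumes qG: "\<forall>i<n. \<forall>j<n. q i j \<in> G"
    and qinv: "\<forall>i<n. \<forall>j<n. op (q i j) (q j i) = e"
    and qdiag: "\<forall>i<n. q i i = e"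
    and T: "\<forall>i j k. i < j \<and> j < k \<and> k < n \<longrightarrow> q i k = op (q i j) (q j k)"
  shows "\<forall>i<n. \<forall>j<n. \<forall>k<n. q i k = op (q i j) (q j k)"
proof (intro allI impI)
  fix i j k assume ijk: "i < n" "j < n" "k < n"
  have G: "\<And>a b. a < n \<Longrightarrow> b < n \<Longrightarrow> q a b \<in> G" using qG by blast
  have qi: "\<And>a b. a < n \<Longrightarrow> b < n \<Longrightarrow> q b a = iv (q a b)"
  proof -
    fix a b assume ab: "a < n" "b < n"
    have "op (q a b) (q b a) = e" using qinv ab by blast
    then show "q b a = iv (q a b)" using inv_unique[OF G[OF ab] G[OF ab(2) ab(1)]] by simp
  qed
  have qii: "\<And>a. a < n \<Longrightarrow> q a a = e" using qdiag by blast
  have tr: "\<And>a b c. a < b \<Longrightarrow> b < c \<Longrightarrow> c < n \<Longrightarrow> q a c = op (q a b) (q b c)"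
  proof -
    fix a b c assume "a < b" "b < c" "c < n"
    then show "q a c = op (q a b) (q b c)" using T by simp
  qed
  show "q i k = op (q i j) (q j k)"
  proof (cases "i = j")
    case True then show ?thesis using ijk qii G by simp
  next
    case ij: False
    show ?thesis
    proof (cases "j = k")
      case True then show ?thesis using ijk qii G by simp
    next
      case jk: False
      show ?thesis
      proof (cases "i = k")
        case True then show ?thesis using ijk qii qinv by simp
      next
        case False
        consider "i < j" "j < k" | "i < k" "k < j" | "j < i" "i < k"
          | "j < k" "k < i" | "k < i" "i < j" | "k < j" "j < i"
          using six[OF ij jk False] by (elim disjE conjE) auto
        then show ?thesis
        proof cases
          case 1 then show ?thesis using tr[of i j k] ijk by simp
        next
          case 2
          have t: "q i j = op (q i k) (q k j)" using tr[of i k j] 2 ijk by simp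
          show ?thesis unfolding t qi[OF ijk(3) ijk(2)] using id1 G ijk by simp
        next
          case 3
          have t: "q j k = op (q j i) (q i k)" using tr[of j i k] 3 ijk by simp
          show ?thesis unfolding t qi[OF ijk(2) ijk(1)] using linv2 G ijk by simp
        next
          case 4
          have t: "q j i = op (q j k) (q k i)" using tr[of j k i] 4 ijk by simp
          show ?thesis unfolding qi[OF ijk(3) ijk(1)] qi[OF ijk(2) ijk(1)] t
            using id3 G ijk by simp
        next
          case 5
          have t: "q k j = op (q k i) (q i j)" using tr[of k i j] 5 ijk by simp
          show ?thesis unfolding qi[OF ijk(3) ijk(1)] qi[OF ijk(3) ijk(2)] t
            using id2 iv_op G ijk by simp
        next
          case 6
          have t: "q k i = op (q k j) (q j i)" using tr[of k j i] 6 ijk by simp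
          show ?thesis unfolding qi[OF ijk(3) ijk(1)] qi[OF ijk(3) ijk(2)] qi[OF ijk(2) ijk(1)] t
            using id4 G ijk by simp
        qed
      qed
    qed
  qed
qed

end

lemma setop_Icc:
  assumes rag: "real_alo_group G op" and cont: "continuous_on (G \<times> G) (\<lambda>(a, b). op a b)"
    and iv: "is_interval G"
    and G: "a1 \<in> G" "a2 \<in> G" "b1 \<in> G" "b2 \<in> G" and le: "a1 \<le> a2" "b1 \<le> b2"
  shows "set_op op {a1..a2} {b1..b2} = {op a1 b1..op a2 b2}"
proof -
  interpret ag G op by (rule ag.intro[OF rag])
  have I: "\<And>a b x. a \<in> G \<Longrightarrow> b \<in> G \<Longrightarrow> a \<le> x \<Longrightarrow> x \<le> b \<Longrightarrow> x \<in> G"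
    using iv unfolding is_interval_1 by blast
  have sub: "{a1..a2} \<subseteq> G" "{b1..b2} \<subseteq> G" using I[of a1 a2] I[of b1 b2] G by auto
  have eq: "set_op op {a1..a2} {b1..b2} = (\<lambda>(a, b). op a b) ` ({a1..a2} \<times> {b1..b2})"
  proof (rule set_eqI)
    fix x
    show "x \<in> set_op op {a1..a2} {b1..b2} \<longleftrightarrow> x \<in> (\<lambda>(a, b). op a b) ` ({a1..a2} \<times> {b1..b2})"
    proof
      assume "x \<in> set_op op {a1..a2} {b1..b2}"
      then obtain a b where "a \<in> {a1..a2}" "b \<in> {b1..b2}" "x = op a b"
        unfolding set_op_def by blast
      then show "x \<in> (\<lambda>(a, b). op a b) ` ({a1..a2} \<times> {b1..b2})"
        by (intro image_eqI[of _ _ "(a, b)"]) auto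
    next
      assume "x \<in> (\<lambda>(a, b). op a b) ` ({a1..a2} \<times> {b1..b2})"
      then obtain p where "p \<in> {a1..a2} \<times> {b1..b2}" "x = (\<lambda>(a, b). op a b) p" by blast
      then show "x \<in> set_op op {a1..a2} {b1..b2}" unfolding set_op_def
        by (cases p) auto
    qed
  qed
  show ?thesis
  proof
    show "set_op op {a1..a2} {b1..b2} \<subseteq> {op a1 b1..op a2 b2}"
    proof
      fix x assume "x \<in> set_op op {a1..a2} {b1..b2}"
      then obtain a b where ab: "a \<in> {a1..a2}" "b \<in> {b1..b2}" "x = op a b"
        unfolding set_op_def by blast
      have aG: "a \<in> G" "b \<in> G" using ab sub by auto
      have "op a1 b1 \<le> op a b1" using mono1 G aG ab by auto
      also have "\<dots> \<le> op a b" using mono2 G aG ab by auto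
      finally have 1: "op a1 b1 \<le> x" using ab by simp
      have "op a b \<le> op a2 b" using mono1 G aG ab by auto
      also have "\<dots> \<le> op a2 b2" using mono2 G aG ab by auto
      finally have 2: "x \<le> op a2 b2" using ab by simp
      show "x \<in> {op a1 b1..op a2 b2}" using 1 2 by simp
    qed
    have c: "connected ((\<lambda>(a, b). op a b) ` ({a1..a2} \<times> {b1..b2}))"
      apply (rule connected_continuous_image)
       apply (rule continuous_on_subset[OF cont]) using sub apply blast
      by (simp add: connected_Times)
    show "{op a1 b1..op a2 b2} \<subseteq> set_op op {a1..a2} {b1..b2}"
      unfolding eq
    proof (rule connected_contains_Icc[OF c])
      show "op a1 b1 \<in> (\<lambda>(a, b). op a b) ` ({a1..a2} \<times> {b1..b2})"
        by (rule image_eqI[of _ _ "(a1, b1)"]) (use le in auto)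
      show "op a2 b2 \<in> (\<lambda>(a, b). op a b) ` ({a1..a2} \<times> {b1..b2})"
        by (rule image_eqI[of _ _ "(a2, b2)"]) (use le in auto)
    qed
  qed
qed


lemma triple:
  assumes rag: "real_alo_group G op" and cont: "continuous_on (G \<times> G) (\<lambda>(a, b). op a b)"
    and iG: "is_interval G"
    and x: "x1 \<in> G" "x2 \<in> G" "x1 \<le> x2"
    and y: "y1 \<in> G" "y2 \<in> G" "y1 \<le> y2"
    and z: "z1 \<in> G" "z2 \<in> G" "z1 \<le> z2"
  shows "set_op op (set_op op {x1..x2} {y1..y2}) {ag.iv G op z2..ag.iv G op z1} =
         set_op op (set_op op {z1..z2} {ag.iv G op y2..ag.iv G op y1}) {ag.iv G op x2..ag.iv G op x1}
     \<longleftrightarrow> op z1 z2 = op (op (op x1 x2) y1) y2"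
proof -
  interpret ag G op by (rule ag.intro[OF rag])
  have ivle: "\<And>a b. a \<in> G \<Longrightarrow> b \<in> G \<Longrightarrow> a \<le> b \<Longrightarrow> iv b \<le> iv a"
  proof -
    fix a b assume ab: "a \<in> G" "b \<in> G" "a \<le> b"
    have "op (iv b) (op a (iv a)) \<le> op (iv b) (op b (iv a))"
      using mono2[of "op a (iv a)" "op b (iv a)" "iv b"] mono1[OF ab(1) ab(2) iv_in[OF ab(1)] ab(3)] ab
      by simp
    then show "iv b \<le> iv a" using ab by simp
  qed
  have le2: "\<And>a1 a2 b1 b2. a1 \<in> G \<Longrightarrow> a2 \<in> G \<Longrightarrow> b1 \<in> G \<Longrightarrow> b2 \<in> G \<Longrightarrow> a1 \<le> a2 \<Longrightarrow> b1 \<le> b2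
     \<Longrightarrow> op a1 b1 \<le> op a2 b2"
  proof -
    fix a1 a2 b1 b2 :: real
    assume h: "a1 \<in> G" "a2 \<in> G" "b1 \<in> G" "b2 \<in> G" "a1 \<le> a2" "b1 \<le> b2"
    have "op a1 b1 \<le> op a2 b1" using mono1 h by simp
    also have "\<dots> \<le> op a2 b2" using mono2 h by simp
    finally show "op a1 b1 \<le> op a2 b2" .
  qed
  have S: "\<And>a1 a2 b1 b2. a1 \<in> G \<Longrightarrow> a2 \<in> G \<Longrightarrow> b1 \<in> G \<Longrightarrow> b2 \<in> G \<Longrightarrow> a1 \<le> a2 \<Longrightarrow> b1 \<le> b2
     \<Longrightarrow> set_op op {a1..a2} {b1..b2} = {op a1 b1..op a2 b2}"
    using setop_Icc[OF rag cont iG] by blast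
  have L: "set_op op (set_op op {x1..x2} {y1..y2}) {iv z2..iv z1} =
      {op (op x1 y1) (iv z2) .. op (op x2 y2) (iv z1)}"
    using S[of x1 x2 y1 y2] S[of "op x1 y1" "op x2 y2" "iv z2" "iv z1"] x y z le2[of x1 x2 y1 y2] ivle[of z1 z2]
    by simp
  have R: "set_op op (set_op op {z1..z2} {iv y2..iv y1}) {iv x2..iv x1} =
      {op (op z1 (iv y2)) (iv x2) .. op (op z2 (iv y1)) (iv x1)}"
    using S[of z1 z2 "iv y2" "iv y1"] S[of "op z1 (iv y2)" "op z2 (iv y1)" "iv x2" "iv x1"] x y z
      le2[of z1 z2 "iv y2" "iv y1"] ivle[of y1 y2] ivle[of x1 x2]
    by simp
  have Lle: "op (op x1 y1) (iv z2) \<le> op (op x2 y2) (iv z1)"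
    using le2[of x1 x2 y1 y2] le2[of "op x1 y1" "op x2 y2" "iv z2" "iv z1"] x y z ivle[of z1 z2] by simp
  have lo: "(op (op x1 y1) (iv z2) = op (op z1 (iv y2)) (iv x2)) \<longleftrightarrow> op z1 z2 = op (op (op x1 x2) y1) y2"
    using lower x y z by simp
  have hi: "(op (op x2 y2) (iv z1) = op (op z2 (iv y1)) (iv x1)) \<longleftrightarrow> op z2 z1 = op (op (op x2 x1) y2) y1"
    using lower x y z by simp
  have hi2: "op (op (op x2 x1) y2) y1 = op (op (op x1 x2) y1) y2"
    using x y by (simp add: ac)
  have hi3: "op z2 z1 = op z1 z2" using z comm by simp
  show ?thesis unfolding iv_def[symmetric] L R Icc_eq_Icc using Lle lo hi hi2 hi3 by auto
qed

theorem theorem4: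
  fixes G :: "real set" and op :: "real \<Rightarrow> real \<Rightarrow> real"
    and n :: nat and A :: "nat \<Rightarrow> nat \<Rightarrow> real \<times> real"
  assumes "continuous_alo_group G op"
    and "open G" and "is_interval G" and "G \<noteq> {}"
    and "is_IPCM G n A"
    and "G_reciprocal G op n A"
  shows "(G_consistent op n A \<longleftrightarrow>
           (\<forall>i<n. \<forall>j<n. \<forall>k<n.
              op (fst (A i k)) (snd (A i k)) =
              op (op (op (fst (A i j)) (snd (A i j))) (fst (A j k))) (snd (A j k))))
       \<and> (G_consistent op n A \<longleftrightarrow>
           (\<forall>i j k. i < j \<and> j < k \<and> k < n \<longrightarrow>
              op (fst (A i k)) (snd (A i k)) =
              op (op (op (fst (A i j)) (snd (A i j))) (fst (A j k))) (snd (A j k))))"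
proof -
  have rag: "real_alo_group G op" and cont: "continuous_on (G \<times> G) (\<lambda>(a, b). op a b)"
    using assms(1) unfolding continuous_alo_group_def by auto
  interpret ag G op by (rule ag.intro[OF rag])
  have inG: "\<And>i j. i < n \<Longrightarrow> j < n \<Longrightarrow> fst (A i j) \<in> G \<and> snd (A i j) \<in> G \<and> fst (A i j) \<le> snd (A i j)"
    using assms(5) unfolding is_IPCM_def in_intG_def by blast
  have rec: "\<And>i j. i < n \<Longrightarrow> j < n \<Longrightarrow> A j i = (iv (snd (A i j)), iv (fst (A i j)))"
    using assms(6) unfolding G_reciprocal_def int_inv_def iv_def by blast
  define P where "P i j k \<longleftrightarrow> op (fst (A i k)) (snd (A i k)) =
              op (op (op (fst (A i j)) (snd (A i j))) (fst (A j k))) (snd (A j k))" for i j k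
  have tri: "\<And>i j k. i < n \<Longrightarrow> j < n \<Longrightarrow> k < n \<Longrightarrow>
     (set_op op (set_op op (int_set (A i j)) (int_set (A j k))) (int_set (A k i)) =
      set_op op (set_op op (int_set (A i k)) (int_set (A k j))) (int_set (A j i))) \<longleftrightarrow> P i j k"
  proof -
    fix i j k assume ijk: "i < n" "j < n" "k < n"
    have e1: "int_set (A k i) = {iv (snd (A i k))..iv (fst (A i k))}"
      unfolding int_set_def rec[OF ijk(1) ijk(3)] by simp
    have e2: "int_set (A k j) = {iv (snd (A j k))..iv (fst (A j k))}"
      unfolding int_set_def rec[OF ijk(2) ijk(3)] by simp
    have e3: "int_set (A j i) = {iv (snd (A i j))..iv (fst (A i j))}"
      unfolding int_set_def rec[OF ijk(1) ijk(2)] by simp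
    show "?thesis i j k"
      unfolding e1 e2 e3 P_def
      unfolding int_set_def
      using triple[OF rag cont assms(3), of "fst (A i j)" "snd (A i j)" "fst (A j k)" "snd (A j k)"
          "fst (A i k)" "snd (A i k)"] inG[OF ijk(1) ijk(2)] inG[OF ijk(2) ijk(3)] inG[OF ijk(1) ijk(3)]
      by simp
  qed
  have C: "G_consistent op n A \<longleftrightarrow> (\<forall>i<n. \<forall>j<n. \<forall>k<n. P i j k)"
    unfolding G_consistent_def using tri by blast
  define q where "q i j = op (fst (A i j)) (snd (A i j))" for i j
  have Pq: "\<And>i j k. i < n \<Longrightarrow> j < n \<Longrightarrow> k < n \<Longrightarrow> P i j k \<longleftrightarrow> q i k = op (q i j) (q j k)"
    unfolding P_def q_def using inG by (simp add: assoc)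
  have qG: "\<forall>i<n. \<forall>j<n. q i j \<in> G" unfolding q_def using inG by simp
  have qinv: "\<forall>i<n. \<forall>j<n. op (q i j) (q j i) = e"
  proof (intro allI impI)
    fix i j assume ij: "i < n" "j < n"
    show "op (q i j) (q j i) = e"
      unfolding q_def rec[OF ij] fst_conv snd_conv using id4[of "fst (A i j)" "snd (A i j)", symmetric] inG[OF ij]
      by simp
  qed
  have qdiag: "\<forall>i<n. q i i = e"
  proof (intro allI impI)
    fix i assume i: "i < n"
    have "fst (A i i) = iv (snd (A i i))" using rec[OF i i] by (metis fst_conv)
    then show "q i i = e" unfolding q_def using inG[OF i i] by simp
  qed
  have all: "(\<forall>i<n. \<forall>j<n. \<forall>k<n. P i j k) \<longleftrightarrow> (\<forall>i j k. i < j \<and> j < k \<and> k < n \<longrightarrow> P i j k)"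
  proof
    assume h0: "\<forall>i<n. \<forall>j<n. \<forall>k<n. P i j k"
    show "\<forall>i j k. i < j \<and> j < k \<and> k < n \<longrightarrow> P i j k"
    proof (intro allI impI)
      fix i j k assume "i < j \<and> j < k \<and> k < n"
      then have "i < n" "j < n" "k < n" by auto
      then show "P i j k" using h0 by blast
    qed
  next
    assume h: "\<forall>i j k. i < j \<and> j < k \<and> k < n \<longrightarrow> P i j k"
    have "\<forall>i j k. i < j \<and> j < k \<and> k < n \<longrightarrow> q i k = op (q i j) (q j k)"
    proof (intro allI impI)
      fix i j k assume "i < j \<and> j < k \<and> k < n"
      then have "i < n" "j < n" "k < n" "P i j k" using h by auto
      then show "q i k = op (q i j) (q j k)" using Pq[of i j k] by blast
    qed
    then have "\<forall>i<n. \<forall>j<n. \<forall>k<n. q i k = op (q i j) (q j k)"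
      by (rule trans_all[OF qG qinv qdiag])
    then show "\<forall>i<n. \<forall>j<n. \<forall>k<n. P i j k" using Pq by blast
  qed
  have D: "G_consistent op n A \<longleftrightarrow> (\<forall>i j k. i < j \<and> j < k \<and> k < n \<longrightarrow> P i j k)"
    using C all by simp
  show ?thesis unfolding P_def[symmetric] using C D by simp
qed

end
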